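(* Let $A$ be a MON-1qfa over $\Sigma$ and let $L_A\subseteq\Sigma^*$ be a language recognized by $A$ with cut-point $\lambda$ isolated by $\delta$. Then there exists a Latvian automaton $A'$ recognizing $L_{A'}=L_A$ with cut-point $\lambda'=\frac12$ isolated by $\delta'=\frac{\delta}{2\cdot\max(\lambda,1-\lambda)}$.
   Context: A MON-1qfa (measure-only one-way quantum finite automaton) over a finite alphabet $\Sigma$ is a tuple $A=\langle\Sigma\cup\{\#\},(O_c)_{c\in\Sigma\cup\{\#\}},\pi_0,F\rangle$, where $\pi_0\in\mathbb{C}^{1\times m}$ has norm $1$, each $O_c$ is an observable, i.e. a Hermitian $m\times m$ matrix with spectral decomposition $O_c=\sum_{r\in V(O_c)} r\,P_c(r)$ ($V(O_c)$ its set of eigenvalues, $P_c(r)$ the orthogonal projector onto the eigenspace of $r$), and $F\subseteq V(O_\#)$. On input $x=x_1\cdots x_n\in\Sigma^*$ the automaton starts in $\pi_0$, performs successively the measurements $O_{x_1},\dots,O_{x_n}$ and finally $O_\#$, and accepts iff the outcome of the last measurement lies in $F$. Formally, with $\rho_0=\pi_0^\dagger\pi_0$ and $\rho_i=\sum_{r\in V(O_{x_i})}P_{x_i}(r)\rho_{i-1}P_{x_i}(r)$, the acceptance probability is $p_A(x)=\sum_{r\in F}\mathrm{tr}(P_\#(r)\rho_n)$. A Latvian automaton is a one-way quantum automaton $A'=(Q,\Sigma,\{\mathcal{A}_a\},q_0,Q_{acc})$ with finite set of basis states $Q$, initial state $|q_0\rangle$, where for each $a\in\Sigma\cup\{\cent,\$\}$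 (with end-markers $\cent,\$$), $\mathcal{A}_a=M_aU_a$ consists of a unitary $U_a$ followed by a projective measurement $M_a$ (a family of orthogonal projectors summing to the identity), and $M_\$$ is the measurement with respect to the decomposition into the span of $Q_{acc}$ and its orthogonal complement; on input $w$ it processes $\cent w\$$ symbol by symbol (applying $U_a$ then $M_a$) and accepts iff the final measurement yields the accepting subspace; $p_{A'}(w)$ denotes the acceptance probability. An automaton $B$ with acceptance probability $p_B$ recognizes $L$ with cut-point $\lambda$ isolated by $\delta>0$ iff for all words $x$: $x\in L\Leftrightarrow p_B(x)>\lambda$, and $|p_B(x)-\lambda|\ge\delta$. *)

theory Defs
  imports "Jordan_Normal_Form.Schur_Decomposition"
begin

definition mtrace :: "complex mat \<Rightarrow> complex" where
  "mtrace A = (\<Sum>i<dim_row A. A $$ (i, i))"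

definition mat_sum :: "nat \<Rightarrow> ('b \<Rightarrow> complex mat) \<Rightarrow> 'b set \<Rightarrow> complex mat" where
  "mat_sum n f A = mat n n (\<lambda>(i, j). \<Sum>a\<in>A. f a $$ (i, j))"

definition hermitian :: "nat \<Rightarrow> complex mat \<Rightarrow> bool" where
  "hermitian n H \<longleftrightarrow> H \<in> carrier_mat n n \<and> mat_adjoint H = H"

definition unitary :: "nat \<Rightarrow> complex mat \<Rightarrow> bool" where
  "unitary n U \<longleftrightarrow> U \<in> carrier_mat n n \<and> mat_adjoint U * U = 1\<^sub>m n \<and> U * mat_adjoint U = 1\<^sub>m n"

definition orth_proj :: "nat \<Rightarrow> complex mat \<Rightarrow> bool" where
  "orth_proj n P \<longleftrightarrow> hermitian n P \<and> P * P = P"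

text \<open>\<open>observable n Obs V P\<close>: \<open>Obs\<close> is a Hermitian n x n matrix with spectral decomposition
  \<open>Obs = (\<Sum>r\<in>V. r P(r))\<close>, where \<open>V\<close> is its (finite) set of eigenvalues and \<open>P r\<close> the orthogonal
  projector onto the eigenspace of \<open>r\<close>: the \<open>P r\<close> (r in V) are nonzero, pairwise orthogonal
  orthogonal projectors summing to the identity, and the \<open>r\<close> are distinct (V is a set).\<close>
definition observable :: "nat \<Rightarrow> complex mat \<Rightarrow> real set \<Rightarrow> (real \<Rightarrow> complex mat) \<Rightarrow> bool" where
  "observable n Obs V P \<longleftrightarrow>
     hermitian n Obs \<and> finite V \<and>
     (\<forall>r\<in>V. orth_proj n (P r) \<and> P r \<noteq> 0\<^sub>m n n) \<and>
     (\<forall>r\<in>V. \<forall>s\<in>V. r \<noteq> s \<longrightarrow> P r * P s = 0\<^sub>m n n) \<and>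
     mat_sum n P V = 1\<^sub>m n \<and>
     Obs = mat_sum n (\<lambda>r. complex_of_real r \<cdot>\<^sub>m P r) V"

text \<open>The alphabet \<open>\<Sigma> \<union> {#}\<close> is rendered as \<open>'a option\<close>, with \<open>None\<close> playing the role of \<open>#\<close>.
  A MON-1qfa of dimension m is given by: the observables \<open>Obs c\<close> with eigenvalue sets \<open>V c\<close> and
  eigenprojectors \<open>P c r\<close>, the initial (row) vector \<open>pi0\<close>, and the accepting set \<open>F \<subseteq> V(O_#)\<close>.\<close>
definition mon_1qfa ::
  "nat \<Rightarrow> ('a option \<Rightarrow> complex mat) \<Rightarrow> ('a option \<Rightarrow> real set) \<Rightarrow> ('a option \<Rightarrow> real \<Rightarrow> complex mat)
   \<Rightarrow> complex vec \<Rightarrow> real set \<Rightarrow> bool" where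
  "mon_1qfa m Obs V P pi0 F \<longleftrightarrow>
     (\<forall>c. observable m (Obs c) (V c) (P c)) \<and>
     pi0 \<in> carrier_vec m \<and> (\<Sum>i<m. (cmod (pi0 $ i))\<^sup>2) = 1 \<and>
     F \<subseteq> V None"

text \<open>\<open>rho_0 = pi0^\<dagger> pi0\<close> for the row vector \<open>pi0\<close>.\<close>
definition mon_rho0 :: "nat \<Rightarrow> complex vec \<Rightarrow> complex mat" where
  "mon_rho0 m pi0 = mat m m (\<lambda>(i, j). cnj (pi0 $ i) * pi0 $ j)"

definition mon_step :: "nat \<Rightarrow> real set \<Rightarrow> (real \<Rightarrow> complex mat) \<Rightarrow> complex mat \<Rightarrow> complex mat" where
  "mon_step m Vc Pc \<rho> = mat_sum m (\<lambda>r. Pc r * \<rho> * Pc r) Vc"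

definition mon_prob ::
  "nat \<Rightarrow> ('a option \<Rightarrow> real set) \<Rightarrow> ('a option \<Rightarrow> real \<Rightarrow> complex mat)
   \<Rightarrow> complex vec \<Rightarrow> real set \<Rightarrow> 'a list \<Rightarrow> real" where
  "mon_prob m V P pi0 F x =
     (let \<rho>n = foldl (\<lambda>\<rho> a. mon_step m (V (Some a)) (P (Some a)) \<rho>) (mon_rho0 m pi0) x
      in (\<Sum>r\<in>F. Re (mtrace (P None r * \<rho>n))))"

datatype 'a lsym = Sym 'a | Cent | Dollar

definition proj_measurement :: "nat \<Rightarrow> complex mat list \<Rightarrow> bool" where
  "proj_measurement n Ps \<longleftrightarrow>
     (\<forall>k<length Ps. orth_proj n (Ps ! k)) \<and>
     (\<forall>k<length Ps. \<forall>l<length Ps. k \<noteq> l \<longrightarrow> Ps ! k * Ps ! l = 0\<^sub>m n n) \<and>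
     mat_sum n (\<lambda>k. Ps ! k) {..<length Ps} = 1\<^sub>m n"

text \<open>Basis states are \<open>{0..<n}\<close>; projector onto span of the accepting basis states.\<close>
definition acc_proj :: "nat \<Rightarrow> nat set \<Rightarrow> complex mat" where
  "acc_proj n Qacc = mat n n (\<lambda>(i, j). if i = j \<and> i \<in> Qacc then 1 else 0)"

definition latvian ::
  "nat \<Rightarrow> ('a lsym \<Rightarrow> complex mat) \<Rightarrow> ('a lsym \<Rightarrow> complex mat list) \<Rightarrow> nat \<Rightarrow> nat set \<Rightarrow> bool" where
  "latvian n U M q0 Qacc \<longleftrightarrow>
     q0 < n \<and> Qacc \<subseteq> {..<n} \<and>
     (\<forall>a. unitary n (U a)) \<and>
     (\<forall>a. proj_measurement n (M a)) \<and>
     M Dollar = [acc_proj n Qacc, 1\<^sub>m n - acc_proj n Qacc]"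

definition lat_rho0 :: "nat \<Rightarrow> nat \<Rightarrow> complex mat" where
  "lat_rho0 n q0 = mat n n (\<lambda>(i, j). if i = q0 \<and> j = q0 then 1 else 0)"

text \<open>One step \<open>A_a = M_a U_a\<close> on density matrices (outcome not recorded).\<close>
definition lat_step :: "nat \<Rightarrow> complex mat \<Rightarrow> complex mat list \<Rightarrow> complex mat \<Rightarrow> complex mat" where
  "lat_step n Ua Ms \<rho> =
     mat_sum n (\<lambda>k. Ms ! k * (Ua * \<rho> * mat_adjoint Ua) * Ms ! k) {..<length Ms}"

definition lat_prob ::
  "nat \<Rightarrow> ('a lsym \<Rightarrow> complex mat) \<Rightarrow> ('a lsym \<Rightarrow> complex mat list) \<Rightarrow> nat \<Rightarrow> nat set \<Rightarrow> 'a list \<Rightarrow> real" where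
  "lat_prob n U M q0 Qacc w =
     (let \<rho>1 = lat_step n (U Cent) (M Cent) (lat_rho0 n q0);
          \<rho>w = foldl (\<lambda>\<rho> a. lat_step n (U (Sym a)) (M (Sym a)) \<rho>) \<rho>1 w
      in Re (mtrace (acc_proj n Qacc * (U Dollar * \<rho>w * mat_adjoint (U Dollar)))))"

end

theory Submission
  imports Defs
begin

lemma adj_dim[simp]: "dim_row (mat_adjoint A) = dim_col A" "dim_col (mat_adjoint A) = dim_row A"
  unfolding mat_adjoint_def by auto

lemma adj_index[simp]: "i < dim_col A \<Longrightarrow> j < dim_row A \<Longrightarrow> mat_adjoint A $$ (i,j) = cnj (A $$ (j,i))"
  unfolding mat_adjoint_def by (simp add: mat_of_rows_index)

lemma mat_sum_dim[simp]: "dim_row (mat_sum n f A) = n" "dim_col (mat_sum n f A) = n"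
  "mat_sum n f A \<in> carrier_mat n n"
  unfolding mat_sum_def by auto

lemma mat_sum_index[simp]: "i < n \<Longrightarrow> j < n \<Longrightarrow> mat_sum n f A $$ (i,j) = (\<Sum>a\<in>A. f a $$ (i,j))"
  unfolding mat_sum_def by auto

lemma adj_carrier[simp]: "A \<in> carrier_mat a b \<Longrightarrow> mat_adjoint A \<in> carrier_mat b a"
  by (rule carrier_matI) (auto dest: carrier_matD)

lemma adj_four_block:
  fixes A :: "complex mat"
  assumes "A \<in> carrier_mat n1 m1" "B \<in> carrier_mat n1 m2" "C \<in> carrier_mat n2 m1" "D \<in> carrier_mat n2 m2"
  shows "mat_adjoint (four_block_mat A B C D) = four_block_mat (mat_adjoint A) (mat_adjoint C) (mat_adjoint B) (mat_adjoint D)"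
  by (rule eq_matI, insert assms, auto)

lemma adj_one[simp]: "mat_adjoint (1\<^sub>m n) = (1\<^sub>m n :: complex mat)"
  by (rule eq_matI, auto)

lemma adj_zero[simp]: "mat_adjoint (0\<^sub>m a b) = (0\<^sub>m b a :: complex mat)"
  by (rule eq_matI, auto)

lemma adj_adj[simp]: "mat_adjoint (mat_adjoint (A::complex mat)) = A"
  by (rule eq_matI, auto)

lemma adj_minus:
  fixes A :: "complex mat"
  assumes "A \<in> carrier_mat a b" "B \<in> carrier_mat a b"
  shows "mat_adjoint (A - B) = mat_adjoint A - mat_adjoint B"
  by (rule eq_matI, insert assms, auto)

lemma adj_mult:
  fixes A :: "complex mat"
  assumes "A \<in> carrier_mat a b" "B \<in> carrier_mat b c"
  shows "mat_adjoint (A * B) = mat_adjoint B * mat_adjoint A"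
proof (rule eq_matI)
  fix i j assume ij: "i < dim_row (mat_adjoint B * mat_adjoint A)" "j < dim_col (mat_adjoint B * mat_adjoint A)"
  show "mat_adjoint (A * B) $$ (i, j) = (mat_adjoint B * mat_adjoint A) $$ (i, j)"
    using assms ij by (simp add: scalar_prod_def ac_simps)
qed (use assms in auto)
definition S :: "nat \<Rightarrow> complex mat \<Rightarrow> complex \<Rightarrow> complex mat" where
  "S m X y = four_block_mat (four_block_mat X (0\<^sub>m m m) (0\<^sub>m m m) (0\<^sub>m m m)) (0\<^sub>m (m+m) 1) (0\<^sub>m 1 (m+m)) (mat 1 1 (\<lambda>_. y))"

definition Z :: "nat \<Rightarrow> complex mat" where
  "Z m = four_block_mat (four_block_mat (0\<^sub>m m m) (0\<^sub>m m m) (0\<^sub>m m m) (1\<^sub>m m)) (0\<^sub>m (m+m) 1) (0\<^sub>m 1 (m+m)) (1\<^sub>m 1)"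

lemma S_carrier[simp]: "X \<in> carrier_mat m m \<Longrightarrow> S m X y \<in> carrier_mat (m+m+1) (m+m+1)"
  unfolding S_def by (rule four_block_carrier_mat, auto)

lemma Z_carrier[simp]: "Z m \<in> carrier_mat (m+m+1) (m+m+1)"
  unfolding Z_def by (rule four_block_carrier_mat, auto)

lemma S_dims[simp]: "X \<in> carrier_mat m m \<Longrightarrow> dim_row (S m X y) = m+m+1"
   "X \<in> carrier_mat m m \<Longrightarrow> dim_col (S m X y) = m+m+1"
  unfolding S_def by auto

lemma Z_dims[simp]: "dim_row (Z m) = m+m+1" "dim_col (Z m) = m+m+1"
  unfolding Z_def by auto

lemma S_index: assumes "X \<in> carrier_mat m m" "i < m+m+1" "j < m+m+1"
  shows "S m X y $$ (i,j) = (if i<m \<and> j<m then X$$(i,j) else if i = m+m \<and> j = m+m then y else 0)"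
  using assms unfolding S_def by auto

lemma mat11_mult[simp]: "mat 1 1 (\<lambda>_. a) * mat 1 1 (\<lambda>_. b) = mat 1 1 (\<lambda>_. a * b :: complex)"
  by (rule eq_matI, auto simp: scalar_prod_def)

lemma mat11_mult'[simp]: "mat (Suc 0) (Suc 0) (\<lambda>_. a) * mat (Suc 0) (Suc 0) (\<lambda>_. b) = mat (Suc 0) (Suc 0) (\<lambda>_. a * b :: complex)"
  by (rule eq_matI, auto simp: scalar_prod_def)

lemma fb_diag_mult:
  fixes A1 :: "complex mat"
  assumes "A1 \<in> carrier_mat n1 n1" "D1 \<in> carrier_mat n2 n2" "A2 \<in> carrier_mat n1 n1" "D2 \<in> carrier_mat n2 n2"
  shows "four_block_mat A1 (0\<^sub>m n1 n2) (0\<^sub>m n2 n1) D1 * four_block_mat A2 (0\<^sub>m n1 n2) (0\<^sub>m n2 n1) D2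
        = four_block_mat (A1*A2) (0\<^sub>m n1 n2) (0\<^sub>m n2 n1) (D1*D2)"
  apply (subst mult_four_block_mat[of _ n1 n1 _ n2 _ n2 _ _ n1 _ n2])
  using assms by auto

lemma S_mult: assumes "A \<in> carrier_mat m m" "B \<in> carrier_mat m m"
  shows "S m A a * S m B b = S m (A*B) (a*b)"
  unfolding S_def using assms by (simp add: fb_diag_mult)

lemma S_adj: assumes "X \<in> carrier_mat m m" shows "mat_adjoint (S m X y) = S m (mat_adjoint X) (cnj y)"
  by (rule eq_matI, insert assms, auto simp: S_index)

lemma S_add: assumes "A \<in> carrier_mat m m" "B \<in> carrier_mat m m"
  shows "S m A a + S m B b = S m (A+B) (a+b)"
  by (rule eq_matI, insert assms, auto simp: S_index)

lemma S_smult: assumes "A \<in> carrier_mat m m"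
  shows "c \<cdot>\<^sub>m S m A a = S m (c \<cdot>\<^sub>m A) (c*a)"
  by (rule eq_matI, insert assms, auto simp: S_index)

lemma S_mat_sum: assumes "\<And>a. a \<in> I \<Longrightarrow> f a \<in> carrier_mat m m"
  shows "mat_sum (m+m+1) (\<lambda>a. S m (f a) (g a)) I = S m (mat_sum m f I) (\<Sum>a\<in>I. g a)"
proof (rule eq_matI)
  fix i j assume "i < dim_row (S m (mat_sum m f I) (sum g I))" "j < dim_col (S m (mat_sum m f I) (sum g I))"
  then have ij: "i < m+m+1" "j < m+m+1" using carrier_matD[OF S_carrier[OF mat_sum_dim(3)]] by auto
  show "mat_sum (m+m+1) (\<lambda>a. S m (f a) (g a)) I $$ (i, j) = S m (mat_sum m f I) (sum g I) $$ (i, j)"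
    using ij assms by (auto simp: S_index cong: sum.cong)
qed auto

lemma Z_mult_S: assumes "X \<in> carrier_mat m m" shows "Z m * S m X y = S m (0\<^sub>m m m) y" "S m X y * Z m = S m (0\<^sub>m m m) y"
  unfolding S_def Z_def using assms by (simp_all add: fb_diag_mult)

lemma Z_Z: "Z m * Z m = Z m"
  unfolding Z_def by (simp add: fb_diag_mult)


lemma idx_mult: "A \<in> carrier_mat n k \<Longrightarrow> B \<in> carrier_mat k m \<Longrightarrow> i < n \<Longrightarrow> j < m \<Longrightarrow>
   (A * B) $$ (i,j) = (\<Sum>l<k. A $$ (i,l) * B $$ (l,j))"
  by (auto simp: scalar_prod_def atLeast0LessThan)

lemma idx_smult: "A \<in> carrier_mat n m \<Longrightarrow> i < n \<Longrightarrow> j < m \<Longrightarrow> (c \<cdot>\<^sub>m A) $$ (i,j) = c * A $$ (i,j)"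
  by auto

lemma sum_lessThan_plus: "(\<Sum>i<a+b. f i) = (\<Sum>i<a. f i) + (\<Sum>i<b. f (a+i))" for f :: "nat \<Rightarrow> complex"
  by (induct b) (auto simp: add.assoc)

lemma mtrace_four_block:
  assumes "A \<in> carrier_mat n1 n1" "D \<in> carrier_mat n2 n2"
  shows "mtrace (four_block_mat A B C D) = mtrace A + mtrace D"
  using assms unfolding mtrace_def by (simp add: sum_lessThan_plus)

lemma mtrace_comm:
  assumes "A \<in> carrier_mat a b" "B \<in> carrier_mat b a"
  shows "mtrace (A * B) = mtrace (B * A)"
  using assms unfolding mtrace_def 
  by (simp add: scalar_prod_def sum.swap[of _ "{..<a}"] mult.commute atLeast0LessThan)

lemma mtrace_smult: "A \<in> carrier_mat n n \<Longrightarrow> mtrace (c \<cdot>\<^sub>m A) = c * mtrace A"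
  unfolding mtrace_def by (auto simp: sum_distrib_left intro!: sum.cong)

lemma mat_sum_mult:
  assumes "X \<in> carrier_mat n n" "\<And>a. a \<in> I \<Longrightarrow> f a \<in> carrier_mat n n"
  shows "mat_sum n f I * X = mat_sum n (\<lambda>a. f a * X) I"
proof (rule eq_matI)
  fix i j assume ij: "i < dim_row (mat_sum n (\<lambda>a. f a * X) I)" "j < dim_col (mat_sum n (\<lambda>a. f a * X) I)"
  then have i: "i < n" "j < n" by auto
  have "(mat_sum n f I * X) $$ (i,j) = (\<Sum>k<n. (\<Sum>a\<in>I. f a $$ (i,k)) * X $$ (k,j))"
    using i assms by (subst idx_mult[of _ n n _ n]) auto
  also have "\<dots> = (\<Sum>a\<in>I. \<Sum>k<n. f a $$ (i,k) * X $$ (k,j))"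
    by (simp add: sum_distrib_right sum.swap[of _ "{..<n}"])
  also have "\<dots> = mat_sum n (\<lambda>a. f a * X) I $$ (i,j)"
  proof -
    have "\<And>a. a \<in> I \<Longrightarrow> (f a * X) $$ (i,j) = (\<Sum>k<n. f a $$ (i,k) * X $$ (k,j))"
      by (rule idx_mult) (use assms i in auto)
    then show ?thesis using i by simp
  qed
  finally show "(mat_sum n f I * X) $$ (i,j) = mat_sum n (\<lambda>a. f a * X) I $$ (i,j)" .
qed (use assms in auto)

lemma mult_mat_sum:
  assumes "X \<in> carrier_mat n n" "\<And>a. a \<in> I \<Longrightarrow> f a \<in> carrier_mat n n"
  shows "X * mat_sum n f I = mat_sum n (\<lambda>a. X * f a) I"
proof (rule eq_matI)
  fix i j assume ij: "i < dim_row (mat_sum n (\<lambda>a. X * f a) I)" "j < dim_col (mat_sum n (\<lambda>a. X * f a) I)"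
  then have i: "i < n" "j < n" by auto
  have "(X * mat_sum n f I) $$ (i,j) = (\<Sum>k<n. X $$ (i,k) * (\<Sum>a\<in>I. f a $$ (k,j)))"
    using i assms by (subst idx_mult[of _ n n _ n]) auto
  also have "\<dots> = (\<Sum>a\<in>I. \<Sum>k<n. X $$ (i,k) * f a $$ (k,j))"
    by (simp add: sum_distrib_left sum.swap[of _ "{..<n}"])
  also have "\<dots> = mat_sum n (\<lambda>a. X * f a) I $$ (i,j)"
  proof -
    have "\<And>a. a \<in> I \<Longrightarrow> (X * f a) $$ (i,j) = (\<Sum>k<n. X $$ (i,k) * f a $$ (k,j))"
      by (rule idx_mult) (use assms i in auto)
    then show ?thesis using i by simp
  qed
  finally show "(X * mat_sum n f I) $$ (i,j) = mat_sum n (\<lambda>a. X * f a) I $$ (i,j)" .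
qed (use assms in auto)

lemma mtrace_mat_sum: assumes "\<And>a. a \<in> I \<Longrightarrow> f a \<in> carrier_mat n n"
  shows "mtrace (mat_sum n f I) = (\<Sum>a\<in>I. mtrace (f a))"
proof -
  have "\<And>a. a \<in> I \<Longrightarrow> dim_row (f a) = n" using assms by auto
  then show ?thesis unfolding mtrace_def by (simp add: sum.swap[of _ "{..<n}"])
qed

lemma mat_sum_smult: assumes "\<And>a. a \<in> I \<Longrightarrow> f a \<in> carrier_mat n n"
  shows "mat_sum n (\<lambda>a. c \<cdot>\<^sub>m f a) I = c \<cdot>\<^sub>m mat_sum n f I"
proof (rule eq_matI)
  fix i j assume "i < dim_row (c \<cdot>\<^sub>m mat_sum n f I)" "j < dim_col (c \<cdot>\<^sub>m mat_sum n f I)"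
  then have ij: "i < n" "j < n" by auto
  have "\<And>a. a \<in> I \<Longrightarrow> (c \<cdot>\<^sub>m f a) $$ (i,j) = c * f a $$ (i,j)"
    by (rule idx_smult) (use assms ij in auto)
  then show "mat_sum n (\<lambda>a. c \<cdot>\<^sub>m f a) I $$ (i, j) = (c \<cdot>\<^sub>m mat_sum n f I) $$ (i, j)"
    using ij by (simp add: sum_distrib_left)
qed auto

lemma adj_mat_sum: assumes "\<And>a. a \<in> I \<Longrightarrow> f a \<in> carrier_mat n n"
  shows "mat_adjoint (mat_sum n f I) = mat_sum n (\<lambda>a. mat_adjoint (f a)) I"
proof (rule eq_matI)
  fix i j assume "i < dim_row (mat_sum n (\<lambda>a. mat_adjoint (f a)) I)" "j < dim_col (mat_sum n (\<lambda>a. mat_adjoint (f a)) I)"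
  then have ij: "i < n" "j < n" by auto
  have "\<And>a. a \<in> I \<Longrightarrow> mat_adjoint (f a) $$ (i,j) = cnj (f a $$ (j,i))"
    using assms ij by (metis adj_index carrier_matD)
  then show "mat_adjoint (mat_sum n f I) $$ (i, j) = mat_sum n (\<lambda>a. mat_adjoint (f a)) I $$ (i, j)"
    using ij by simp
qed auto

lemma proj_compl:
  fixes P :: "complex mat"
  assumes "P \<in> carrier_mat n n" "P * P = P"
  shows "(1\<^sub>m n - P) * (1\<^sub>m n - P) = 1\<^sub>m n - P" "P * (1\<^sub>m n - P) = 0\<^sub>m n n" "(1\<^sub>m n - P) * P = 0\<^sub>m n n"
    "P + (1\<^sub>m n - P) = 1\<^sub>m n"
proof -
  have a: "P * (1\<^sub>m n - P) = 0\<^sub>m n n"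
    using assms by (subst mult_minus_distrib_mat[of _ n n]) (auto intro: eq_matI)
  have b: "(1\<^sub>m n - P) * P = 0\<^sub>m n n"
    using assms by (subst minus_mult_distrib_mat[of _ n n]) (auto intro: eq_matI)
  show "(1\<^sub>m n - P) * (1\<^sub>m n - P) = 1\<^sub>m n - P"
    using assms a b by (subst minus_mult_distrib_mat[of _ n n]) (auto intro: eq_matI)
  show "P * (1\<^sub>m n - P) = 0\<^sub>m n n" by (rule a)
  show "(1\<^sub>m n - P) * P = 0\<^sub>m n n" by (rule b)
  show "P + (1\<^sub>m n - P) = 1\<^sub>m n" using assms by (auto intro: eq_matI)
qed


lemma mat_sum_cong: "(\<And>a. a \<in> I \<Longrightarrow> f a = g a) \<Longrightarrow> mat_sum n f I = mat_sum n g I"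
  unfolding mat_sum_def by (auto intro!: cong_mat sum.cong)

lemma mat_sum_list:
  assumes "distinct rs" "h z \<in> carrier_mat n n"
  shows "mat_sum n (\<lambda>k. h ((map f rs @ [z]) ! k)) {..<Suc (length rs)} = mat_sum n (\<lambda>r. h (f r)) (set rs) + h z"
proof (rule eq_matI)
  fix i j assume "i < dim_row (mat_sum n (\<lambda>r. h (f r)) (set rs) + h z)" "j < dim_col (mat_sum n (\<lambda>r. h (f r)) (set rs) + h z)"
  then have ij: "i < n" "j < n" using assms by auto
  have "(\<Sum>k<Suc (length rs). h ((map f rs @ [z]) ! k) $$ (i,j)) =
     (\<Sum>k<length rs. h ((map f rs @ [z]) ! k) $$ (i,j)) + h z $$ (i,j)"
    by (simp add: nth_append)
  also have "(\<Sum>k<length rs. h ((map f rs @ [z]) ! k) $$ (i,j)) = (\<Sum>k<length rs. h (f (rs ! k)) $$ (i,j))"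
    by (rule sum.cong) (auto simp: nth_append)
  also have "\<dots> = (\<Sum>r\<in>set rs. h (f r) $$ (i,j))"
    by (rule sum.reindex_bij_betw[of "(!) rs", where g = "\<lambda>r. h (f r) $$ (i,j)"], rule bij_betw_nth) (use assms in auto)
  finally show "mat_sum n (\<lambda>k. h ((map f rs @ [z]) ! k)) {..<Suc (length rs)} $$ (i, j) = (mat_sum n (\<lambda>r. h (f r)) (set rs) + h z) $$ (i, j)"
    using ij assms by simp
qed (use assms in auto)

definition R :: "nat \<Rightarrow> complex mat \<Rightarrow> complex mat \<Rightarrow> complex mat \<Rightarrow> complex \<Rightarrow> complex mat" where
  "R m X B C y = four_block_mat (four_block_mat X (0\<^sub>m m m) (0\<^sub>m m m) (0\<^sub>m m m)) B C (mat 1 1 (\<lambda>_. y))"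

lemma S_R: "S m X y = R m X (0\<^sub>m (m+m) 1) (0\<^sub>m 1 (m+m)) y"
  unfolding S_def R_def by simp

lemma R_carrier[simp]: "X \<in> carrier_mat m m \<Longrightarrow> R m X B C y \<in> carrier_mat (m+m+1) (m+m+1)"
  unfolding R_def by (rule four_block_carrier_mat, auto)

lemma fb_dl:
  fixes a :: "complex mat"
  assumes "a \<in> carrier_mat k k" "d \<in> carrier_mat l l" "dim_row p = k" "dim_row q = k" "dim_row r = l" "dim_row s = l"
    "dim_col r = dim_col p" "dim_col s = dim_col q"
  shows "four_block_mat a (0\<^sub>m k l) (0\<^sub>m l k) d * four_block_mat p q r s = four_block_mat (a*p) (a*q) (d*r) (d*s)"
  apply (subst mult_four_block_mat[of _ k k _ l _ l _ _ "dim_col p" _ "dim_col q"])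
  using assms by (auto intro!: carrier_matI)

lemma fb_dr:
  fixes a :: "complex mat"
  assumes "a \<in> carrier_mat k k" "d \<in> carrier_mat l l" "dim_col p = k" "dim_col q = l" "dim_col r = k" "dim_col s = l"
    "dim_row q = dim_row p" "dim_row s = dim_row r"
  shows "four_block_mat p q r s * four_block_mat a (0\<^sub>m k l) (0\<^sub>m l k) d = four_block_mat (p*a) (q*d) (r*a) (s*d)"
  apply (subst mult_four_block_mat[of _ "dim_row p" k _ l _ "dim_row r" _ _ k _ l])
  using assms by (auto intro!: carrier_matI)

lemma mat11_zero[simp]: "mat 1 1 (\<lambda>_. 0) = (0\<^sub>m 1 1 :: complex mat)"
  by (rule eq_matI) auto

lemma mat11_zero'[simp]: "mat (Suc 0) (Suc 0) (\<lambda>_. 0) = (0\<^sub>m (Suc 0) (Suc 0) :: complex mat)"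
  by (rule eq_matI) auto

lemma mat11_one[simp]: "mat (Suc 0) (Suc 0) (\<lambda>_. 1) = (1\<^sub>m (Suc 0) :: complex mat)"
  by (rule eq_matI) auto

definition Mid :: "nat \<Rightarrow> complex mat" where
  "Mid m = four_block_mat (four_block_mat (0\<^sub>m m m) (0\<^sub>m m m) (0\<^sub>m m m) (1\<^sub>m m)) (0\<^sub>m (m+m) 1) (0\<^sub>m 1 (m+m)) (0\<^sub>m 1 1)"

lemma Mid_carrier[simp]: "Mid m \<in> carrier_mat (m+m+1) (m+m+1)"
  unfolding Mid_def by (rule four_block_carrier_mat, auto)

lemma SRS:
  assumes "Q \<in> carrier_mat m m" "X \<in> carrier_mat m m" "B \<in> carrier_mat (m+m) 1" "C \<in> carrier_mat 1 (m+m)"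
  shows "S m Q 0 * R m X B C y * S m Q 0 = S m (Q * X * Q) 0"
  unfolding S_def R_def
  using assms by (simp add: fb_dl fb_dr carrier_matD)

lemma S1RS1:
  assumes "X \<in> carrier_mat m m" "B \<in> carrier_mat (m+m) 1" "C \<in> carrier_mat 1 (m+m)"
  shows "S m (0\<^sub>m m m) 1 * R m X B C y * S m (0\<^sub>m m m) 1 = S m (0\<^sub>m m m) y"
  unfolding S_def R_def
  using assms by (simp add: fb_dl fb_dr carrier_matD)

lemma MRM:
  assumes "X \<in> carrier_mat m m" "B \<in> carrier_mat (m+m) 1" "C \<in> carrier_mat 1 (m+m)"
  shows "Mid m * R m X B C y * Mid m = S m (0\<^sub>m m m) 0"
  unfolding S_def R_def Mid_def
  using assms by (simp add: fb_dl fb_dr carrier_matD)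

lemma Mid_Mid: "Mid m * Mid m = Mid m"
  unfolding Mid_def by (simp add: fb_dl fb_dr)

lemma Mid_adj: "mat_adjoint (Mid m) = Mid m"
  by (rule eq_matI) (auto simp: Mid_def)

lemma Mid_S: assumes "X \<in> carrier_mat m m" shows "Mid m * S m X y = 0\<^sub>m (m+m+1) (m+m+1)" "S m X y * Mid m = 0\<^sub>m (m+m+1) (m+m+1)"
  unfolding Mid_def S_def using assms by (simp_all add: fb_dl fb_dr carrier_matD)

lemma S_zero: "S m (0\<^sub>m m m) 0 = 0\<^sub>m (m+m+1) (m+m+1)"
  by (rule eq_matI) (auto simp: S_index)

lemma S_one_Mid: "S m (1\<^sub>m m) 0 + Mid m + S m (0\<^sub>m m m) 1 = 1\<^sub>m (m+m+1)"
  by (rule eq_matI) (auto simp: S_index Mid_def)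


lemma S_carrier'[simp]: "X \<in> carrier_mat m m \<Longrightarrow> S m X y \<in> carrier_mat (Suc (m+m)) (Suc (m+m))"
  using S_carrier by simp
lemma Mid_carrier'[simp]: "Mid m \<in> carrier_mat (Suc (m+m)) (Suc (m+m))"
  using Mid_carrier by simp
lemma R_carrier'[simp]: "X \<in> carrier_mat m m \<Longrightarrow> R m X B C y \<in> carrier_mat (Suc (m+m)) (Suc (m+m))"
  using R_carrier by simp

lemma mat_sum_list2:
  assumes "distinct rs" "h z1 \<in> carrier_mat n n" "h z2 \<in> carrier_mat n n"
  shows "mat_sum n (\<lambda>k. h ((map f rs @ [z1, z2]) ! k)) {..<length (map f rs @ [z1, z2])}
       = mat_sum n (\<lambda>r. h (f r)) (set rs) + h z1 + h z2"
proof (rule eq_matI)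
  fix i j assume "i < dim_row (mat_sum n (\<lambda>r. h (f r)) (set rs) + h z1 + h z2)"
     "j < dim_col (mat_sum n (\<lambda>r. h (f r)) (set rs) + h z1 + h z2)"
  then have ij: "i < n" "j < n" using assms by auto
  have "(\<Sum>k<length (map f rs @ [z1, z2]). h ((map f rs @ [z1, z2]) ! k) $$ (i,j)) =
     (\<Sum>k<length rs. h ((map f rs @ [z1, z2]) ! k) $$ (i,j)) + h z1 $$ (i,j) + h z2 $$ (i,j)"
    by (simp add: nth_append)
  also have "(\<Sum>k<length rs. h ((map f rs @ [z1, z2]) ! k) $$ (i,j)) = (\<Sum>k<length rs. h (f (rs ! k)) $$ (i,j))"
    by (rule sum.cong) (auto simp: nth_append)
  also have "\<dots> = (\<Sum>r\<in>set rs. h (f r) $$ (i,j))"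
    by (rule sum.reindex_bij_betw[of "(!) rs", where g = "\<lambda>r. h (f r) $$ (i,j)"], rule bij_betw_nth) (use assms in auto)
  finally show "mat_sum n (\<lambda>k. h ((map f rs @ [z1, z2]) ! k)) {..<length (map f rs @ [z1, z2])} $$ (i, j) = (mat_sum n (\<lambda>r. h (f r)) (set rs) + h z1 + h z2) $$ (i, j)"
    using ij assms by simp
qed (use assms in auto)

definition Ms :: "nat \<Rightarrow> ('b \<Rightarrow> complex mat) \<Rightarrow> 'b list \<Rightarrow> complex mat list" where
  "Ms m Q rs = map (\<lambda>r. S m (Q r) 0) rs @ [Mid m, S m (0\<^sub>m m m) 1]"

lemma Ms_nth: "k < length (Ms m Q rs) \<Longrightarrow> Ms m Q rs ! k =
   (if k < length rs then S m (Q (rs ! k)) 0 else if k = length rs then Mid m else S m (0\<^sub>m m m) 1)"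
  unfolding Ms_def by (auto simp: nth_append less_Suc_eq)

lemma Ms_len: "length (Ms m Q rs) = Suc (Suc (length rs))"
  unfolding Ms_def by simp

definition proj_fam :: "nat \<Rightarrow> ('b \<Rightarrow> complex mat) \<Rightarrow> 'b set \<Rightarrow> bool" where
  "proj_fam m Q I \<longleftrightarrow> (\<forall>r\<in>I. Q r \<in> carrier_mat m m \<and> mat_adjoint (Q r) = Q r \<and> Q r * Q r = Q r) \<and>
     (\<forall>r\<in>I. \<forall>s\<in>I. r \<noteq> s \<longrightarrow> Q r * Q s = 0\<^sub>m m m) \<and> mat_sum m Q I = 1\<^sub>m m"

lemma Ms_meas:
  assumes "distinct rs" "proj_fam m Q (set rs)"
  shows "proj_measurement (m+m+1) (Ms m Q rs)"
proof -
  let ?n = "m+m+1"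
  have Q: "\<And>r. r \<in> set rs \<Longrightarrow> Q r \<in> carrier_mat m m" "\<And>r. r \<in> set rs \<Longrightarrow> mat_adjoint (Q r) = Q r"
      "\<And>r. r \<in> set rs \<Longrightarrow> Q r * Q r = Q r"
      "\<And>r s. r \<in> set rs \<Longrightarrow> s \<in> set rs \<Longrightarrow> r \<noteq> s \<Longrightarrow> Q r * Q s = 0\<^sub>m m m"
      "mat_sum m Q (set rs) = 1\<^sub>m m"
    using assms(2) unfolding proj_fam_def by auto
  have orth: "orth_proj ?n (Ms m Q rs ! k)" if k: "k < length (Ms m Q rs)" for k
  proof (cases "k < length rs")
    case True
    then have r: "rs ! k \<in> set rs" by simp
    show ?thesis unfolding Ms_nth[OF k] using True Q(1-3)[OF r]
      by (simp add: orth_proj_def hermitian_def S_adj S_mult)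
  next
    case False
    show ?thesis
    proof (cases "k = length rs")
      case True
      then show ?thesis unfolding Ms_nth[OF k] by (simp add: orth_proj_def hermitian_def Mid_Mid Mid_adj)
    next
      case False
      then show ?thesis unfolding Ms_nth[OF k] using \<open>\<not> k < length rs\<close>
        by (simp add: orth_proj_def hermitian_def S_adj S_mult)
    qed
  qed
  have pw: "Ms m Q rs ! k * Ms m Q rs ! l = 0\<^sub>m ?n ?n"
    if k: "k < length (Ms m Q rs)" and l: "l < length (Ms m Q rs)" and kl: "k \<noteq> l" for k l
  proof -
    have kk: "k < length rs \<or> k = length rs \<or> k = Suc (length rs)" using k by (auto simp: Ms_len)
    have ll: "l < length rs \<or> l = length rs \<or> l = Suc (length rs)" using l by (auto simp: Ms_len)
    show ?thesis
    proof (cases "k < length rs")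
      case kT: True
      then have r: "rs ! k \<in> set rs" by simp
      show ?thesis
      proof (cases "l < length rs")
        case True
        then have s: "rs ! l \<in> set rs" by simp
        have "rs ! k \<noteq> rs ! l" using kT True kl assms(1) by (simp add: nth_eq_iff_index_eq)
        then show ?thesis unfolding Ms_nth[OF k] Ms_nth[OF l] using kT True Q(1)[OF r] Q(1)[OF s] Q(4)[OF r s]
          by (simp add: S_mult S_zero)
      next
        case False
        then show ?thesis unfolding Ms_nth[OF k] Ms_nth[OF l] using kT Q(1)[OF r]
          by (auto simp: S_mult S_zero Mid_S)
      qed
    next
      case kF: False
      show ?thesis
      proof (cases "l < length rs")
        case True
        then have s: "rs ! l \<in> set rs" by simp
        show ?thesis unfolding Ms_nth[OF k] Ms_nth[OF l] using kF True Q(1)[OF s]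
          by (auto simp: S_mult S_zero Mid_S)
      next
        case False
        then show ?thesis unfolding Ms_nth[OF k] Ms_nth[OF l] using kF kk ll kl
          by (auto simp: S_mult S_zero Mid_S)
      qed
    qed
  qed
  have "mat_sum ?n (\<lambda>k. Ms m Q rs ! k) {..<length (Ms m Q rs)} =
        mat_sum ?n (\<lambda>r. S m (Q r) 0) (set rs) + Mid m + S m (0\<^sub>m m m) 1"
    unfolding Ms_def using mat_sum_list2[OF assms(1), where h = "\<lambda>M. M" and n = ?n] by simp
  also have "\<dots> = 1\<^sub>m ?n"
    using Q S_mat_sum[of "set rs" Q m "\<lambda>_. 0"] S_one_Mid[of m] by simp
  finally show ?thesis unfolding proj_measurement_def using orth pw by auto
qed

lemma Ms_step:
  assumes "distinct rs" "\<And>r. r \<in> set rs \<Longrightarrow> Q r \<in> carrier_mat m m"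
    "U * rho * mat_adjoint U = R m X B C y"
    "X \<in> carrier_mat m m" "B \<in> carrier_mat (m+m) 1" "C \<in> carrier_mat 1 (m+m)"
  shows "lat_step (m+m+1) U (Ms m Q rs) rho = S m (mat_sum m (\<lambda>r. Q r * X * Q r) (set rs)) y"
proof -
  let ?n = "m+m+1"
  have "lat_step ?n U (Ms m Q rs) rho = mat_sum ?n (\<lambda>k. Ms m Q rs ! k * R m X B C y * Ms m Q rs ! k) {..<length (Ms m Q rs)}"
    unfolding lat_step_def assms(3) ..
  also have "\<dots> = mat_sum ?n (\<lambda>r. S m (Q r) 0 * R m X B C y * S m (Q r) 0) (set rs)
     + Mid m * R m X B C y * Mid m + S m (0\<^sub>m m m) 1 * R m X B C y * S m (0\<^sub>m m m) 1"
    unfolding Ms_def using assms(4-6)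
    by (subst mat_sum_list2[OF assms(1), where h = "\<lambda>M. M * R m X B C y * M" and n = ?n]) (simp_all add: MRM S1RS1)
  also have "\<dots> = mat_sum ?n (\<lambda>r. S m (Q r * X * Q r) 0) (set rs) + S m (0\<^sub>m m m) 0 + S m (0\<^sub>m m m) y"
    using assms by (simp add: MRM S1RS1 SRS cong: mat_sum_cong)
  also have "\<dots> = S m (mat_sum m (\<lambda>r. Q r * X * Q r) (set rs)) y"
  proof -
    have c: "\<And>r. r \<in> set rs \<Longrightarrow> Q r * X * Q r \<in> carrier_mat m m"
      using assms(2,4) by (meson mult_carrier_mat)
    show ?thesis
      using S_mat_sum[of "set rs" "\<lambda>r. Q r * X * Q r" m "\<lambda>_. 0", OF c] assms by (simp add: S_add)
  qed
  finally show ?thesis .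
qed


definition Wm :: "nat \<Rightarrow> complex mat \<Rightarrow> complex mat" where
  "Wm m PF = four_block_mat (four_block_mat PF (1\<^sub>m m - PF) (1\<^sub>m m - PF) PF) (0\<^sub>m (m+m) 1) (0\<^sub>m 1 (m+m)) (1\<^sub>m 1)"

lemma Wm_carrier[simp]: "PF \<in> carrier_mat m m \<Longrightarrow> Wm m PF \<in> carrier_mat (m+m+1) (m+m+1)"
  "PF \<in> carrier_mat m m \<Longrightarrow> Wm m PF \<in> carrier_mat (Suc (m+m)) (Suc (m+m))"
  unfolding Wm_def by (rule four_block_carrier_mat, auto)+

lemma Wm_adj: assumes "PF \<in> carrier_mat m m" "mat_adjoint PF = PF"
  shows "mat_adjoint (Wm m PF) = Wm m PF"
  unfolding Wm_def using assms
  apply (subst adj_four_block[of _ "m+m" "m+m" _ 1 _ 1 _])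
  apply (auto)[4]
  apply (subst adj_four_block[of _ m m _ m _ m _])
  by (auto simp: adj_minus[of _ m m])

lemma Wm_sq: assumes "PF \<in> carrier_mat m m" "PF * PF = PF"
  shows "Wm m PF * Wm m PF = 1\<^sub>m (m+m+1)"
proof -
  note pc = proj_compl[OF assms]
  have "four_block_mat PF (1\<^sub>m m - PF) (1\<^sub>m m - PF) PF * four_block_mat PF (1\<^sub>m m - PF) (1\<^sub>m m - PF) PF
     = four_block_mat (1\<^sub>m m) (0\<^sub>m m m) (0\<^sub>m m m) (1\<^sub>m m)"
    apply (subst mult_four_block_mat[of _ m m _ m _ m _ _ m _ m])
    using assms pc by (auto intro!: eq_matI)
  then show ?thesis unfolding Wm_def using assms by (simp add: fb_dl)
qed

lemma inner3:
  fixes PF :: "complex mat"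
  assumes "PF \<in> carrier_mat m m" "QF \<in> carrier_mat m m" "X \<in> carrier_mat m m"
  shows "four_block_mat PF QF QF PF * four_block_mat X (0\<^sub>m m m) (0\<^sub>m m m) (0\<^sub>m m m) * four_block_mat PF QF QF PF
    = four_block_mat (PF * X * PF) (PF * X * QF) (QF * X * PF) (QF * X * QF)"
proof -
  have "four_block_mat PF QF QF PF * four_block_mat X (0\<^sub>m m m) (0\<^sub>m m m) (0\<^sub>m m m) =
     four_block_mat (PF * X) (0\<^sub>m m m) (QF * X) (0\<^sub>m m m)"
    apply (subst mult_four_block_mat[of _ m m _ m _ m _ _ m _ m])
    using assms by auto
  moreover have "four_block_mat (PF * X) (0\<^sub>m m m) (QF * X) (0\<^sub>m m m) * four_block_mat PF QF QF PF
    = four_block_mat (PF * X * PF) (PF * X * QF) (QF * X * PF) (QF * X * QF)"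
    apply (subst mult_four_block_mat[of _ m m _ m _ m _ _ m _ m])
    using assms by auto
  ultimately show ?thesis by simp
qed

lemma inner2:
  fixes PF :: "complex mat"
  assumes "PF \<in> carrier_mat m m" "QF \<in> carrier_mat m m" "X \<in> carrier_mat m m"
  shows "four_block_mat (PF * X) (0\<^sub>m m m) (QF * X) (0\<^sub>m m m) * four_block_mat PF QF QF PF
    = four_block_mat (PF * (X * PF)) (PF * (X * QF)) (QF * (X * PF)) (QF * (X * QF))"
    apply (subst mult_four_block_mat[of _ m m _ m _ m _ _ m _ m])
    using assms by auto

lemma mtrace_zero[simp]: "mtrace (0\<^sub>m n n) = 0"
  unfolding mtrace_def by simp

lemma mtrace_11[simp]: "mtrace (mat (Suc 0) (Suc 0) (\<lambda>_. z)) = z"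
  unfolding mtrace_def by simp

lemma final_trace:
  assumes "PF \<in> carrier_mat m m" "PF * PF = PF" "X \<in> carrier_mat m m"
  shows "mtrace (S m (1\<^sub>m m) beta * (Wm m PF * S m X y * Wm m PF)) = mtrace (PF * X) + beta * y"
proof -
  have Q: "1\<^sub>m m - PF \<in> carrier_mat m m" using assms by auto
  have "Wm m PF * S m X y * Wm m PF = four_block_mat (four_block_mat (PF * X * PF) (PF * X * (1\<^sub>m m - PF)) ((1\<^sub>m m - PF) * X * PF) ((1\<^sub>m m - PF) * X * (1\<^sub>m m - PF)))
      (0\<^sub>m (m+m) 1) (0\<^sub>m 1 (m+m)) (mat 1 1 (\<lambda>_. y))"
    unfolding Wm_def S_def using assms Q
    by (simp add: fb_dl fb_dr inner2[OF assms(1) Q assms(3)])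
  then have "mtrace (S m (1\<^sub>m m) beta * (Wm m PF * S m X y * Wm m PF)) = mtrace (PF * X * PF) + beta * y"
    unfolding S_def using assms Q
    by (simp add: fb_dl mtrace_four_block[of _ "m+m" _ 1] mtrace_four_block[of _ m _ m])
  also have "mtrace (PF * X * PF) = mtrace (PF * X)"
  proof -
    have "mtrace (PF * X * PF) = mtrace (PF * (PF * X))"
      using assms by (intro mtrace_comm[of _ m m]) auto
    also have "\<dots> = mtrace (PF * X)" using assms by (simp add: assoc_mult_mat[symmetric, of _ m m _ m _ m])
    finally show ?thesis .
  qed
  finally show ?thesis .
qed


lemma if10_mult[simp]: "(if P then 1 else 0) * x = (if P then x else (0::complex))"
   "x * (if P then 1 else 0) = (if P then x else (0::complex))"
  by auto

lemma if0_mult[simp]: "(if P then x else 0) * y = (if P then x * y else (0::complex))"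
  by auto

lemma hh_sq:
  fixes u :: "nat \<Rightarrow> complex" and a :: complex
  assumes "(\<Sum>k<n. u k * cnj (u k)) = N" "a * a * N = 2 * a"
  shows "mat n n (\<lambda>(i,j). (if i = j then 1 else 0) - a * u i * cnj (u j)) *
         mat n n (\<lambda>(i,j). (if i = j then 1 else 0) - a * u i * cnj (u j)) = 1\<^sub>m n"
proof (rule eq_matI)
  fix i j assume "i < dim_row (1\<^sub>m n :: complex mat)" "j < dim_col (1\<^sub>m n :: complex mat)"
  then have ij: "i < n" "j < n" by auto
  let ?d = "\<lambda>i j. (if i = j then 1 else 0) :: complex"
  have "(\<Sum>k<n. (?d i k - a * u i * cnj (u k)) * (?d k j - a * u k * cnj (u j)))
     = (\<Sum>k<n. ?d i k * ?d k j - ?d i k * (a * u k * cnj (u j)) - a * u i * cnj (u k) * ?d k j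
          + a * a * u i * cnj (u j) * (u k * cnj (u k)))"
    by (rule sum.cong) (auto simp: algebra_simps)
  also have "\<dots> = (\<Sum>k<n. ?d i k * ?d k j) - (\<Sum>k<n. ?d i k * (a * u k * cnj (u j)))
     - (\<Sum>k<n. a * u i * cnj (u k) * ?d k j) + a * a * u i * cnj (u j) * (\<Sum>k<n. u k * cnj (u k))"
    by (simp add: sum.distrib sum_subtractf sum_distrib_left)
  finally have eq: "(\<Sum>k<n. (?d i k - a * u i * cnj (u k)) * (?d k j - a * u k * cnj (u j)))
     = (\<Sum>k<n. ?d i k * ?d k j) - (\<Sum>k<n. ?d i k * (a * u k * cnj (u j)))
     - (\<Sum>k<n. a * u i * cnj (u k) * ?d k j) + a * a * u i * cnj (u j) * (\<Sum>k<n. u k * cnj (u k))" .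
  have d1: "(\<Sum>k<n. ?d i k * ?d k j) = ?d i j" using ij by simp
  have d2: "(\<Sum>k<n. ?d i k * (a * u k * cnj (u j))) = a * u i * cnj (u j)" using ij by simp
  have d3: "(\<Sum>k<n. a * u i * cnj (u k) * ?d k j) = a * u i * cnj (u j)" using ij by simp
  have d4: "a * a * u i * cnj (u j) * N = 2 * a * u i * cnj (u j)"
  proof -
    have "a * a * u i * cnj (u j) * N = (a * a * N) * (u i * cnj (u j))" by (simp add: ac_simps)
    also have "\<dots> = 2 * a * u i * cnj (u j)" unfolding assms(2) by (simp add: ac_simps)
    finally show ?thesis .
  qed
  have "(\<Sum>k<n. (?d i k - a * u i * cnj (u k)) * (?d k j - a * u k * cnj (u j))) = ?d i j"
    unfolding eq d1 d2 d3 assms(1) d4 by simp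
  then show "(mat n n (\<lambda>(i,j). (if i = j then 1 else 0) - a * u i * cnj (u j)) *
         mat n n (\<lambda>(i,j). (if i = j then 1 else 0) - a * u i * cnj (u j))) $$ (i, j) = 1\<^sub>m n $$ (i, j)"
    using ij by (subst idx_mult[of _ n n _ n]) auto
qed auto

lemma rho_conj:
  assumes "A \<in> carrier_mat n n" "q < n"
  shows "A * lat_rho0 n q * mat_adjoint A = mat n n (\<lambda>(i,j). A $$ (i,q) * cnj (A $$ (j,q)))"
proof -
  have 1: "A * lat_rho0 n q = mat n n (\<lambda>(i,j). if j = q then A $$ (i,q) else 0)"
  proof (rule eq_matI)
    fix i j assume "i < dim_row (mat n n (\<lambda>(i,j). if j = q then A $$ (i,q) else 0))"
       "j < dim_col (mat n n (\<lambda>(i,j). if j = q then A $$ (i,q) else 0))"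
    then have ij: "i < n" "j < n" by auto
    show "(A * lat_rho0 n q) $$ (i, j) = mat n n (\<lambda>(i,j). if j = q then A $$ (i,q) else 0) $$ (i, j)"
      using ij assms by (subst idx_mult[of _ n n _ n]) (auto simp: lat_rho0_def)
  qed (use assms in \<open>auto simp: lat_rho0_def\<close>)
  show ?thesis
  proof (rule eq_matI)
    fix i j assume "i < dim_row (mat n n (\<lambda>(i,j). A $$ (i,q) * cnj (A $$ (j,q))))"
       "j < dim_col (mat n n (\<lambda>(i,j). A $$ (i,q) * cnj (A $$ (j,q))))"
    then have ij: "i < n" "j < n" by auto
    show "(A * lat_rho0 n q * mat_adjoint A) $$ (i, j) = mat n n (\<lambda>(i,j). A $$ (i,q) * cnj (A $$ (j,q))) $$ (i, j)"
      unfolding 1 using ij assms by (subst idx_mult[of _ n n _ n]) auto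
  qed (use assms in auto)
qed


definition hv :: "nat \<Rightarrow> complex vec \<Rightarrow> real \<Rightarrow> nat \<Rightarrow> complex" where
  "hv m p t i = (if i < m then of_real (sqrt t) * cnj (p $ i) else if i = m+m then of_real (sqrt (1-t)) else 0)"

definition hu :: "nat \<Rightarrow> complex vec \<Rightarrow> real \<Rightarrow> nat \<Rightarrow> complex" where
  "hu m p t i = (if i = m+m then 1 else 0) - hv m p t i"

definition ha :: "real \<Rightarrow> complex" where
  "ha t = of_real (2 / (2 - 2 * sqrt (1-t)))"

definition HH :: "nat \<Rightarrow> complex vec \<Rightarrow> real \<Rightarrow> complex mat" where
  "HH m p t = mat (m+m+1) (m+m+1) (\<lambda>(i,j). (if i = j then 1 else 0) - ha t * hu m p t i * cnj (hu m p t j))"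

lemma sum_lessThan_plus_r: "(\<Sum>i<a+b. f i) = (\<Sum>i<a. f i) + (\<Sum>i<b. f (a+i))" for f :: "nat \<Rightarrow> real"
  by (induct b) (auto simp: add.assoc)

lemma s_lt1: "0 < t \<Longrightarrow> t \<le> 1 \<Longrightarrow> sqrt (1 - t) < 1"
  by (simp add: real_sqrt_less_iff[of _ 1, simplified])

lemma hu_norm:
  assumes "0 < t" "t \<le> 1" "(\<Sum>i<m. (cmod (p $ i))\<^sup>2) = 1"
  shows "(\<Sum>k<m+m+1. (cmod (hu m p t k))\<^sup>2) = 2 - 2 * sqrt (1 - t)"
proof -
  let ?s = "sqrt (1-t)"
  have a: "\<And>k. k < m \<Longrightarrow> (cmod (hu m p t k))\<^sup>2 = t * (cmod (p $ k))\<^sup>2"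
    using assms by (auto simp: hu_def hv_def norm_mult power_mult_distrib)
  have b: "\<And>k. k < m \<Longrightarrow> hu m p t (m + k) = 0"
    by (auto simp: hu_def hv_def)
  have c: "(cmod (hu m p t (m+m)))\<^sup>2 = (1 - ?s)\<^sup>2"
  proof -
    have e: "hu m p t (m+m) = of_real (1 - ?s)" by (simp add: hu_def hv_def)
    have "cmod (hu m p t (m+m)) = \<bar>1 - ?s\<bar>" unfolding e by (simp only: norm_of_real)
    then show ?thesis by simp
  qed
  have "(\<Sum>k<m+m+1. (cmod (hu m p t k))\<^sup>2) = (\<Sum>k<m. (cmod (hu m p t k))\<^sup>2) + (\<Sum>k<m. (cmod (hu m p t (m+k)))\<^sup>2) + (cmod (hu m p t (m+m)))\<^sup>2"
    by (simp add: sum_lessThan_plus_r)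
  also have "\<dots> = t + (1 - ?s)\<^sup>2"
    using a b c assms(3) by (simp add: sum_distrib_left[symmetric])
  also have "\<dots> = 2 - 2 * ?s"
    using assms by (simp add: power2_eq_square algebra_simps)
  finally show ?thesis .
qed

lemma hu_sum:
  assumes "0 < t" "t \<le> 1" "(\<Sum>i<m. (cmod (p $ i))\<^sup>2) = 1"
  shows "(\<Sum>k<m+m+1. hu m p t k * cnj (hu m p t k)) = of_real (2 - 2 * sqrt (1 - t))"
proof -
  have "(\<Sum>k<m+m+1. hu m p t k * cnj (hu m p t k)) = (\<Sum>k<m+m+1. of_real ((cmod (hu m p t k))\<^sup>2))"
    by (rule sum.cong) (simp_all only: complex_norm_square)
  also have "\<dots> = of_real (\<Sum>k<m+m+1. (cmod (hu m p t k))\<^sup>2)" by (simp only: of_real_sum)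
  also have "\<dots> = of_real (2 - 2 * sqrt (1 - t))" by (simp only: hu_norm[OF assms])
  finally show ?thesis .
qed

lemma ha_prop:
  assumes "0 < t" "t \<le> 1"
  shows "ha t * ha t * of_real (2 - 2 * sqrt (1 - t)) = 2 * ha t" "ha t * of_real (1 - sqrt (1-t)) = 1"
proof -
  have ne: "2 - 2 * sqrt (1 - t) \<noteq> 0" "1 - sqrt (1-t) \<noteq> 0" using s_lt1[OF assms] by auto
  have r1: "(2 / (2 - 2 * sqrt (1-t))) * (2 / (2 - 2 * sqrt (1-t))) * (2 - 2 * sqrt (1 - t)) = 2 * (2 / (2 - 2 * sqrt (1-t)))"
  proof -
    have g: "\<And>N::real. N \<noteq> 0 \<Longrightarrow> (2/N)*(2/N)*N = 2*(2/N)" by (simp add: field_simps)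
    show ?thesis by (rule g) (use ne in auto)
  qed
  have r2: "(2 / (2 - 2 * sqrt (1-t))) * (1 - sqrt (1-t)) = 1"
    using ne by (simp add: field_simps)
  show "ha t * ha t * of_real (2 - 2 * sqrt (1 - t)) = 2 * ha t"
    unfolding ha_def by (simp only: of_real_mult[symmetric] r1) simp
  show "ha t * of_real (1 - sqrt (1-t)) = 1"
    unfolding ha_def by (simp only: of_real_mult[symmetric] r2) simp
qed

lemma HH_carrier[simp]: "HH m p t \<in> carrier_mat (m+m+1) (m+m+1)"
  unfolding HH_def by auto

lemma HH_adj: "mat_adjoint (HH m p t) = HH m p t"
  by (rule eq_matI) (auto simp: HH_def ha_def)

lemma HH_sq:
  assumes "0 < t" "t \<le> 1" "(\<Sum>i<m. (cmod (p $ i))\<^sup>2) = 1"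
  shows "HH m p t * HH m p t = 1\<^sub>m (m+m+1)"
  unfolding HH_def by (rule hh_sq[OF hu_sum[OF assms] ha_prop(1)[OF assms(1,2)]])

lemma HH_col:
  assumes "0 < t" "t \<le> 1" "i < m+m+1"
  shows "HH m p t $$ (i, m+m) = hv m p t i"
proof -
  have "hu m p t (m+m) = of_real (1 - sqrt (1-t))" by (simp add: hu_def hv_def)
  then have "HH m p t $$ (i, m+m) = (if i = m+m then 1 else 0) - hu m p t i * (ha t * of_real (1 - sqrt (1-t)))"
    unfolding HH_def using assms by (simp add: ac_simps)
  also have "\<dots> = hv m p t i" using ha_prop(2)[OF assms(1,2)] by (simp add: hu_def)
  finally show ?thesis .
qed


lemma R_index:
  assumes "X \<in> carrier_mat m m" "B \<in> carrier_mat (m+m) 1" "C \<in> carrier_mat 1 (m+m)" "i < m+m+1" "j < m+m+1"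
  shows "R m X B C y $$ (i,j) = (if i < m+m then (if j < m+m then (if i<m \<and> j<m then X$$(i,j) else 0) else B$$(i,0))
           else (if j < m+m then C$$(0,j) else y))"
  using assms unfolding R_def by auto

lemma cent_state:
  assumes "0 < t" "t \<le> 1" "(\<Sum>i<m. (cmod (p $ i))\<^sup>2) = 1"
  shows "HH m p t * lat_rho0 (m+m+1) (m+m) * mat_adjoint (HH m p t) =
    R m (of_real t \<cdot>\<^sub>m mon_rho0 m p) (mat (m+m) 1 (\<lambda>(i,_). hv m p t i * of_real (sqrt (1-t))))
      (mat 1 (m+m) (\<lambda>(_,j). of_real (sqrt (1-t)) * cnj (hv m p t j))) (of_real (1-t))"
proof -
  have st: "sqrt t * sqrt t = t" "sqrt (1-t) * sqrt (1-t) = 1 - t" using assms by auto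
  have rc: "HH m p t * lat_rho0 (m+m+1) (m+m) * mat_adjoint (HH m p t) =
     mat (m + m + 1) (m + m + 1) (\<lambda>(i, j). HH m p t $$ (i, m + m) * cnj (HH m p t $$ (j, m + m)))"
    by (rule rho_conj) (auto simp: HH_def)
  show ?thesis
    unfolding rc
  proof (rule eq_matI)
    fix i j
    assume ij0: "i < dim_row (R m (of_real t \<cdot>\<^sub>m mon_rho0 m p) (mat (m+m) 1 (\<lambda>(i,_). hv m p t i * of_real (sqrt (1-t))))
      (mat 1 (m+m) (\<lambda>(_,j). of_real (sqrt (1-t)) * cnj (hv m p t j))) (of_real (1-t)))"
      "j < dim_col (R m (of_real t \<cdot>\<^sub>m mon_rho0 m p) (mat (m+m) 1 (\<lambda>(i,_). hv m p t i * of_real (sqrt (1-t))))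
      (mat 1 (m+m) (\<lambda>(_,j). of_real (sqrt (1-t)) * cnj (hv m p t j))) (of_real (1-t)))"
    then have ij: "i < m+m+1" "j < m+m+1" by (auto simp: R_def mon_rho0_def)
    show "mat (m + m + 1) (m + m + 1) (\<lambda>(i, j). HH m p t $$ (i, m + m) * cnj (HH m p t $$ (j, m + m))) $$ (i, j) =
          R m (of_real t \<cdot>\<^sub>m mon_rho0 m p) (mat (m+m) 1 (\<lambda>(i,_). hv m p t i * of_real (sqrt (1-t))))
      (mat 1 (m+m) (\<lambda>(_,j). of_real (sqrt (1-t)) * cnj (hv m p t j))) (of_real (1-t)) $$ (i, j)"
      apply (subst R_index)
      using ij assms(1,2) st
      by (auto simp: HH_col hv_def mon_rho0_def of_real_mult[symmetric] simp del: of_real_mult)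
  qed (auto simp: R_def mon_rho0_def)
qed


lemma mat_sum_single: "f a \<in> carrier_mat n n \<Longrightarrow> mat_sum n f {a} = f a"
  by (rule eq_matI) auto

lemma obs_fam:
  assumes "observable m Ob V P"
  shows "proj_fam m P V" "finite V"
  using assms unfolding observable_def proj_fam_def orth_proj_def hermitian_def by auto

lemma one_fam: "proj_fam m (\<lambda>_::nat. 1\<^sub>m m) (set [0])"
  unfolding proj_fam_def by (auto simp: mat_sum_single)

lemma PF_props:
  assumes "proj_fam m P V" "F \<subseteq> V" "finite V"
  shows "mat_sum m P F \<in> carrier_mat m m" "mat_adjoint (mat_sum m P F) = mat_sum m P F"
    "mat_sum m P F * mat_sum m P F = mat_sum m P F"
proof -
  have P: "\<And>r. r \<in> F \<Longrightarrow> P r \<in> carrier_mat m m" "\<And>r. r \<in> F \<Longrightarrow> mat_adjoint (P r) = P r"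
    "\<And>r. r \<in> F \<Longrightarrow> P r * P r = P r" "\<And>r s. r \<in> F \<Longrightarrow> s \<in> F \<Longrightarrow> r \<noteq> s \<Longrightarrow> P r * P s = 0\<^sub>m m m"
    using assms unfolding proj_fam_def by auto
  have fin: "finite F" using assms(2,3) finite_subset by auto
  show "mat_sum m P F \<in> carrier_mat m m" by simp
  show "mat_adjoint (mat_sum m P F) = mat_sum m P F"
    using P by (simp add: adj_mat_sum cong: mat_sum_cong)
  have inner: "mat_sum m (\<lambda>s. P r * P s) F = P r" if r: "r \<in> F" for r
  proof (rule eq_matI)
    fix i j assume "i < dim_row (P r)" "j < dim_col (P r)"
    then have ij: "i < m" "j < m" using P(1)[OF r] by auto
    have "(\<Sum>s\<in>F. (P r * P s) $$ (i,j)) = (P r * P r) $$ (i,j) + (\<Sum>s\<in>F-{r}. (P r * P s) $$ (i,j))"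
      by (rule sum.remove[OF fin r])
    also have "(\<Sum>s\<in>F-{r}. (P r * P s) $$ (i,j)) = 0"
      using P(4)[OF r] ij by (intro sum.neutral) (metis DiffE index_zero_mat(1) insertI1)
    finally show "mat_sum m (\<lambda>s. P r * P s) F $$ (i, j) = P r $$ (i, j)"
      using ij P(3)[OF r] by simp
  qed (use P(1)[OF that] in auto)
  have "mat_sum m P F * mat_sum m P F = mat_sum m (\<lambda>r. P r * mat_sum m P F) F"
    using P by (intro mat_sum_mult) auto
  also have "\<dots> = mat_sum m (\<lambda>r. mat_sum m (\<lambda>s. P r * P s) F) F"
    using P by (intro mat_sum_cong mult_mat_sum) auto
  also have "\<dots> = mat_sum m P F"
    using inner by (intro mat_sum_cong) auto
  finally show "mat_sum m P F * mat_sum m P F = mat_sum m P F" .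
qed

lemma acc_S: "acc_proj (m+m+1) ({..<m} \<union> (if b then {m+m} else {})) = S m (1\<^sub>m m) (if b then 1 else 0)"
  by (rule eq_matI) (auto simp: acc_proj_def S_index)

lemma acc_meas:
  assumes "beta = 0 \<or> beta = 1"
  shows "proj_measurement (m+m+1) [S m (1\<^sub>m m) beta, 1\<^sub>m (m+m+1) - S m (1\<^sub>m m) beta]"
proof -
  let ?n = "m+m+1"
  let ?A = "S m (1\<^sub>m m) beta"
  have A: "?A \<in> carrier_mat ?n ?n" "mat_adjoint ?A = ?A" "?A * ?A = ?A"
    using assms by (auto simp: S_adj S_mult)
  note pc = proj_compl[OF A(1) A(3)]
  have B: "mat_adjoint (1\<^sub>m ?n - ?A) = 1\<^sub>m ?n - ?A"
    using A by (simp add: adj_minus[of _ ?n ?n])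
  have sum: "mat_sum ?n (\<lambda>k. [?A, 1\<^sub>m ?n - ?A] ! k) {..<length [?A, 1\<^sub>m ?n - ?A]} = 1\<^sub>m ?n"
    by (rule eq_matI) (use A in \<open>auto simp: numeral_2_eq_2 lessThan_Suc\<close>)
  show ?thesis unfolding proj_measurement_def
    using A B pc sum by (auto simp: orth_proj_def hermitian_def less_Suc_eq numeral_2_eq_2)
qed


lemma R_dims[simp]: "X \<in> carrier_mat m m \<Longrightarrow> dim_row (R m X B C y) = Suc (m+m)"
  "X \<in> carrier_mat m m \<Longrightarrow> dim_col (R m X B C y) = Suc (m+m)"
  unfolding R_def by auto

lemma mon_fold_carrier: "Y \<in> carrier_mat m m \<Longrightarrow> foldl (\<lambda>\<rho> a. mon_step m (V (Some a)) (P (Some a)) \<rho>) Y w \<in> carrier_mat m m"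
  by (induct w arbitrary: Y) (auto simp: mon_step_def)

lemma mon_step_smult:
  assumes "Y \<in> carrier_mat m m" "\<And>r. r \<in> Vc \<Longrightarrow> Pc r \<in> carrier_mat m m"
  shows "mon_step m Vc Pc (c \<cdot>\<^sub>m Y) = c \<cdot>\<^sub>m mon_step m Vc Pc Y"
proof -
  have "mon_step m Vc Pc (c \<cdot>\<^sub>m Y) = mat_sum m (\<lambda>r. c \<cdot>\<^sub>m (Pc r * Y * Pc r)) Vc"
    unfolding mon_step_def
  proof (rule mat_sum_cong)
    fix r assume r: "r \<in> Vc"
    show "Pc r * (c \<cdot>\<^sub>m Y) * Pc r = c \<cdot>\<^sub>m (Pc r * Y * Pc r)"
      using assms(1) assms(2)[OF r]
      by (simp add: mult_smult_distrib[of _ m m _ m] mult_smult_assoc_mat[of _ m m _ m])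
  qed
  also have "\<dots> = c \<cdot>\<^sub>m mon_step m Vc Pc Y"
    unfolding mon_step_def by (intro mat_sum_smult mult_carrier_mat) (use assms in auto)
  finally show ?thesis .
qed

lemma mon_fold_smult:
  assumes "\<And>a r. r \<in> V (Some a) \<Longrightarrow> P (Some a) r \<in> carrier_mat m m"
  shows "Y \<in> carrier_mat m m \<Longrightarrow> foldl (\<lambda>\<rho> a. mon_step m (V (Some a)) (P (Some a)) \<rho>) (c \<cdot>\<^sub>m Y) w
     = c \<cdot>\<^sub>m foldl (\<lambda>\<rho> a. mon_step m (V (Some a)) (P (Some a)) \<rho>) Y w"
proof (induct w arbitrary: Y)
  case Nil
  then show ?case by simp
next
  case (Cons a w)
  have "mon_step m (V (Some a)) (P (Some a)) (c \<cdot>\<^sub>m Y) = c \<cdot>\<^sub>m mon_step m (V (Some a)) (P (Some a)) Y"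
    using Cons(2) assms by (intro mon_step_smult) auto
  then show ?case using Cons by (simp add: mon_step_def)
qed

lemma lat_fold:
  assumes "\<And>a. proj_fam m (P (Some a)) (V (Some a))" "\<And>a. finite (V (Some a))"
  shows "Y \<in> carrier_mat m m \<Longrightarrow>
    foldl (\<lambda>\<rho> a. lat_step (m+m+1) (1\<^sub>m (m+m+1)) (Ms m (P (Some a)) (sorted_list_of_set (V (Some a)))) \<rho>) (S m Y y) w
    = S m (foldl (\<lambda>\<rho> a. mon_step m (V (Some a)) (P (Some a)) \<rho>) Y w) y"
proof (induct w arbitrary: Y)
  case Nil
  then show ?case by simp
next
  case (Cons a w)
  have c: "\<And>r. r \<in> V (Some a) \<Longrightarrow> P (Some a) r \<in> carrier_mat m m"
    using assms(1)[of a] unfolding proj_fam_def by auto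
  have st: "lat_step (m+m+1) (1\<^sub>m (m+m+1)) (Ms m (P (Some a)) (sorted_list_of_set (V (Some a)))) (S m Y y)
     = S m (mat_sum m (\<lambda>r. P (Some a) r * Y * P (Some a) r) (set (sorted_list_of_set (V (Some a))))) y"
    by (rule Ms_step[where B = "0\<^sub>m (m+m) 1" and C = "0\<^sub>m 1 (m+m)"]) (use Cons(2) c assms(2)[of a] in \<open>auto simp: S_R\<close>)
  have "lat_step (m+m+1) (1\<^sub>m (m+m+1)) (Ms m (P (Some a)) (sorted_list_of_set (V (Some a)))) (S m Y y)
     = S m (mon_step m (V (Some a)) (P (Some a)) Y) y"
    unfolding st mon_step_def using assms(2)[of a] by simp
  then show ?case using Cons by (simp add: mon_step_def)
qed




lemma arith_final:
  fixes p lam t \<delta> pp :: real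
  assumes "t = (if lam < 1/2 then 1/(2*(1-lam)) else 1/(2*lam))"
    "pp = t * p + (if lam < 1/2 then 1 - t else 0)"
    "(x \<in> L \<longleftrightarrow> p > lam) \<and> \<bar>p - lam\<bar> \<ge> \<delta>"
  shows "(x \<in> L \<longleftrightarrow> pp > 1/2) \<and> \<bar>pp - 1/2\<bar> \<ge> \<delta> / (2 * max lam (1 - lam))"
proof -
  define D where "D = 2 * max lam (1 - lam)"
  have D: "D > 0" unfolding D_def by auto
  have eq: "pp - 1/2 = (p - lam) / D"
  proof (cases "lam < 1/2")
    case True
    then have Dv: "D = 2 * (1 - lam)" unfolding D_def by auto
    have tv: "t = 1 / (2 * (1 - lam))" using True assms(1) by simp
    have "pp - 1/2 = t * (p - 1) + 1/2" using True assms(2) by (simp add: algebra_simps)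
    also have "\<dots> = (p - 1) / (2 * (1 - lam)) + 1/2" unfolding tv by simp
    also have "\<dots> = (p - lam) / (2 * (1 - lam))" using True by (simp add: field_simps)
    finally show ?thesis unfolding Dv .
  next
    case False
    then have "D = 2 * lam" unfolding D_def by auto
    then show ?thesis using False assms(1,2) by (simp add: field_simps)
  qed
  have 1: "(x \<in> L \<longleftrightarrow> pp > 1/2)"
  proof -
    have "pp > 1/2 \<longleftrightarrow> (p - lam) / D > 0" using eq by linarith
    also have "\<dots> \<longleftrightarrow> p > lam" using D by (simp add: zero_less_divide_iff)
    finally show ?thesis using assms(3) by simp
  qed
  have "\<bar>pp - 1/2\<bar> = \<bar>p - lam\<bar> / D" using eq D by simp
  also have "\<dots> \<ge> \<delta> / D" using assms(3) D by (simp add: divide_right_mono)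
  finally show ?thesis using 1 unfolding D_def by simp
qed

lemma t_bounds:
  fixes lam t :: real
  assumes "t = (if lam < 1/2 then 1/(2*(1-lam)) else 1/(2*lam))"
  shows "0 < t" "t \<le> 1"
  using assms by (auto simp: field_simps)

theorem theorem2:
  fixes m :: nat
    and Obs :: "'a::finite option \<Rightarrow> complex mat"
    and V :: "'a option \<Rightarrow> real set"
    and P :: "'a option \<Rightarrow> real \<Rightarrow> complex mat"
    and pi0 :: "complex vec"
    and F :: "real set"
    and L :: "'a list set"
    and lam \<delta> :: real
  assumes "mon_1qfa m Obs V P pi0 F"
    and "\<delta> > 0"
    and "\<forall>x. (x \<in> L \<longleftrightarrow> mon_prob m V P pi0 F x > lam) \<and> \<bar>mon_prob m V P pi0 F x - lam\<bar> \<ge> \<delta>"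
  shows "\<exists>(n::nat) (U :: 'a lsym \<Rightarrow> complex mat) (M :: 'a lsym \<Rightarrow> complex mat list) q0 Qacc.
           latvian n U M q0 Qacc \<and>
           (\<forall>x. (x \<in> L \<longleftrightarrow> lat_prob n U M q0 Qacc x > 1/2) \<and>
                \<bar>lat_prob n U M q0 Qacc x - 1/2\<bar> \<ge> \<delta> / (2 * max lam (1 - lam)))"
proof -
  have obs: "\<And>c. observable m (Obs c) (V c) (P c)" and norm: "(\<Sum>i<m. (cmod (pi0 $ i))\<^sup>2) = 1"
    and FV: "F \<subseteq> V None"
    using assms(1) unfolding mon_1qfa_def by auto
  have fam: "\<And>c. proj_fam m (P c) (V c)" "\<And>c. finite (V c)" using obs_fam[OF obs] by auto
  define b where "b = (lam < 1/2)"
  define t where "t = (if lam < 1/2 then 1/(2*(1-lam)) else 1/(2*lam))"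
  have t: "0 < t" "t \<le> 1" using t_bounds[OF t_def] by auto
  define beta :: complex where "beta = (if b then 1 else 0)"
  define n where "n = m+m+1"
  define PF where "PF = mat_sum m (P None) F"
  note PF = PF_props[OF fam(1) FV fam(2), folded PF_def]
  define U :: "'a lsym \<Rightarrow> complex mat" where
    "U = (\<lambda>c. case c of Cent \<Rightarrow> HH m pi0 t | Sym a \<Rightarrow> 1\<^sub>m n | Dollar \<Rightarrow> Wm m PF)"
  define Qacc where "Qacc = {..<m} \<union> (if b then {m+m} else {})"
  define M :: "'a lsym \<Rightarrow> complex mat list" where
    "M = (\<lambda>c. case c of Cent \<Rightarrow> Ms m (\<lambda>_::nat. 1\<^sub>m m) [0]
        | Sym a \<Rightarrow> Ms m (P (Some a)) (sorted_list_of_set (V (Some a)))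
        | Dollar \<Rightarrow> [acc_proj n Qacc, 1\<^sub>m n - acc_proj n Qacc])"
  have acc: "acc_proj n Qacc = S m (1\<^sub>m m) beta" unfolding n_def Qacc_def beta_def by (rule acc_S)
  have fam_sorted: "\<And>a. proj_fam m (P (Some a)) (set (sorted_list_of_set (V (Some a))))"
    using fam by simp
  have unit: "unitary n (U c)" for c
  proof (cases c)
    case (Sym a)
    then show ?thesis unfolding U_def unitary_def by simp
  next
    case Cent
    then show ?thesis unfolding U_def unitary_def n_def using HH_sq[OF t norm] HH_carrier[of m pi0 t] by (simp add: HH_adj)
  next
    case Dollar
    then show ?thesis unfolding U_def unitary_def n_def using PF Wm_sq[OF PF(1) PF(3)] by (simp add: Wm_adj)
  qed
  have meas: "proj_measurement n (M c)" for c
  proof (cases c)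
    case (Sym a)
    then show ?thesis unfolding M_def n_def using Ms_meas[OF distinct_sorted_list_of_set fam_sorted[of a]] by simp
  next
    case Cent
    then show ?thesis unfolding M_def n_def using Ms_meas[OF _ one_fam, of m] by simp
  next
    case Dollar
    then show ?thesis unfolding M_def acc unfolding n_def using acc_meas[of beta m] by (simp add: beta_def)
  qed
  have lat: "latvian n U M (m+m) Qacc"
    unfolding latvian_def using unit meas by (auto simp: n_def Qacc_def M_def)
  have prob: "lat_prob n U M (m+m) Qacc w = t * mon_prob m V P pi0 F w + (if lam < 1/2 then 1 - t else 0)" for w
  proof -
    have famS: "\<And>a. proj_fam m (P (Some a)) (V (Some a))" "\<And>a. finite (V (Some a))" using fam by auto
    have PcS: "\<And>a r. r \<in> V (Some a) \<Longrightarrow> P (Some a) r \<in> carrier_mat m m" using fam(1) unfolding proj_fam_def by auto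
    have Pc: "\<And>c r. r \<in> V c \<Longrightarrow> P c r \<in> carrier_mat m m" using fam(1) unfolding proj_fam_def by auto
    define Y where "Y = foldl (\<lambda>\<rho> a. mon_step m (V (Some a)) (P (Some a)) \<rho>) (mon_rho0 m pi0) w"
    have r0: "mon_rho0 m pi0 \<in> carrier_mat m m" unfolding mon_rho0_def by auto
    have Yc: "Y \<in> carrier_mat m m" unfolding Y_def by (rule mon_fold_carrier[OF r0])
    have X0: "of_real t \<cdot>\<^sub>m mon_rho0 m pi0 \<in> carrier_mat m m" using r0 by simp
    have rho1: "lat_step n (U Cent) (M Cent) (lat_rho0 n (m+m)) = S m (of_real t \<cdot>\<^sub>m mon_rho0 m pi0) (of_real (1-t))"
    proof -
      have "lat_step n (U Cent) (M Cent) (lat_rho0 n (m+m)) =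
          S m (mat_sum m (\<lambda>r. 1\<^sub>m m * (of_real t \<cdot>\<^sub>m mon_rho0 m pi0) * 1\<^sub>m m) (set [0::nat])) (of_real (1-t))"
        unfolding U_def M_def n_def
        unfolding lsym.case by (rule Ms_step[OF _ _ cent_state[OF t norm]]) (use X0 in auto)
      also have "\<dots> = S m (of_real t \<cdot>\<^sub>m mon_rho0 m pi0) (of_real (1-t))"
      proof -
        have "(\<lambda>r::nat. 1\<^sub>m m * (of_real t \<cdot>\<^sub>m mon_rho0 m pi0) * 1\<^sub>m m) = (\<lambda>r. of_real t \<cdot>\<^sub>m mon_rho0 m pi0)"
          by (simp add: mon_rho0_def)
        then show ?thesis using X0 by (simp add: mat_sum_single)
      qed
      finally show ?thesis .
    qed
    have rhow: "foldl (\<lambda>\<rho> a. lat_step n (U (Sym a)) (M (Sym a)) \<rho>) (S m (of_real t \<cdot>\<^sub>m mon_rho0 m pi0) (of_real (1-t))) w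
       = S m (of_real t \<cdot>\<^sub>m Y) (of_real (1-t))"
    proof -
      have "foldl (\<lambda>\<rho> a. lat_step n (U (Sym a)) (M (Sym a)) \<rho>) (S m (of_real t \<cdot>\<^sub>m mon_rho0 m pi0) (of_real (1-t))) w
         = S m (foldl (\<lambda>\<rho> a. mon_step m (V (Some a)) (P (Some a)) \<rho>) (of_real t \<cdot>\<^sub>m mon_rho0 m pi0) w) (of_real (1-t))"
        unfolding U_def M_def n_def using lat_fold[where m=m and P=P and V=V, OF famS(1) famS(2) X0] by simp
      also have "\<dots> = S m (of_real t \<cdot>\<^sub>m Y) (of_real (1-t))"
        unfolding Y_def using mon_fold_smult[where m=m and P=P and V=V, OF PcS r0] by simp
      finally show ?thesis .
    qed
    have "lat_prob n U M (m+m) Qacc w = Re (mtrace (S m (1\<^sub>m m) beta * (Wm m PF * S m (of_real t \<cdot>\<^sub>m Y) (of_real (1-t)) * Wm m PF)))"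
      unfolding lat_prob_def Let_def rho1 rhow acc unfolding U_def using PF by (simp add: Wm_adj)
    also have "\<dots> = Re (mtrace (PF * (of_real t \<cdot>\<^sub>m Y)) + beta * of_real (1-t))"
      using final_trace[OF PF(1) PF(3)] Yc by simp
    also have "mtrace (PF * (of_real t \<cdot>\<^sub>m Y)) = of_real t * (\<Sum>r\<in>F. mtrace (P None r * Y))"
    proof -
      have "mtrace (PF * (of_real t \<cdot>\<^sub>m Y)) = of_real t * mtrace (PF * Y)"
        using PF(1) Yc by (simp add: mult_smult_distrib[of _ m m _ m] mtrace_smult[of _ m])
      also have "PF * Y = mat_sum m (\<lambda>r. P None r * Y) F"
        unfolding PF_def using Pc FV Yc by (intro mat_sum_mult) auto
      also have "mtrace (mat_sum m (\<lambda>r. P None r * Y) F) = (\<Sum>r\<in>F. mtrace (P None r * Y))"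
        using Pc FV Yc by (intro mtrace_mat_sum mult_carrier_mat) auto
      finally show ?thesis .
    qed
    finally have lp: "lat_prob n U M (m+m) Qacc w = Re (of_real t * (\<Sum>r\<in>F. mtrace (P None r * Y)) + beta * of_real (1-t))" .
    have mp: "mon_prob m V P pi0 F w = (\<Sum>r\<in>F. Re (mtrace (P None r * Y)))"
      unfolding mon_prob_def Let_def Y_def ..
    show ?thesis unfolding lp mp by (simp add: beta_def b_def Re_sum sum_distrib_left)
  qed
  show ?thesis
  proof (intro exI conjI allI)
    show "latvian n U M (m+m) Qacc" by (rule lat)
  next
    fix x
    show "(x \<in> L) = (1 / 2 < lat_prob n U M (m + m) Qacc x)"
      using arith_final[OF t_def prob assms(3)[rule_format, of x]] by blast
    show "\<delta> / (2 * max lam (1 - lam)) \<le> \<bar>lat_prob n U M (m + m) Qacc x - 1 / 2\<bar>"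
      using arith_final[OF t_def prob assms(3)[rule_format, of x]] by blast
  qed
qed


end
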